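(* Let $(X,\mathrm{dist})$ be a metric space, $P\subset X$ finite, $\varepsilon\ge0$, and suppose $G$ is a bipartite Steiner $(1+\varepsilon)$-spanner for $P$ with $|E|$ edges. Then there is a $(2+2\varepsilon)$-spanner for $P$ (a geometric graph with vertex set exactly $P$) with at most $|E|$ edges.
   Context: A geometric graph on a finite subset $V$ of $X$ has each edge $uv$ weighted by $\mathrm{dist}(u,v)$; $\mathrm{dist}_G$ denotes shortest-path length. A Steiner $t$-spanner for $P$ is a geometric graph $G$ on $P\cup S$ for a finite $S\subset X\setminus P$ with $\mathrm{dist}_G(u,v)\le t\,\mathrm{dist}(u,v)$ for all $u,v\in P$; it is bipartite if every edge joins a point of $P$ to a point of $S$. A $t$-spanner is a Steiner $t$-spanner with $S=\emptyset$. *)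

theory Defs
  imports "HOL-Analysis.Analysis" "HOL-Library.Extended_Real"
begin

definition geometric_graph :: "'a::metric_space set \<Rightarrow> 'a set set \<Rightarrow> bool" where
  "geometric_graph V E \<longleftrightarrow> finite V \<and>
     (\<forall>e\<in>E. \<exists>u v. e = {u, v} \<and> u \<noteq> v \<and> u \<in> V \<and> v \<in> V)"

definition is_walk :: "'a set \<Rightarrow> 'a set set \<Rightarrow> 'a list \<Rightarrow> bool" where
  "is_walk V E xs \<longleftrightarrow> xs \<noteq> [] \<and> set xs \<subseteq> V \<and>
     (\<forall>i. Suc i < length xs \<longrightarrow> {xs ! i, xs ! Suc i} \<in> E)"

definition walk_length :: "'a::metric_space list \<Rightarrow> real" where
  "walk_length xs = (\<Sum>i<length xs - 1. dist (xs ! i) (xs ! Suc i))"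

text \<open>Shortest-path distance in the geometric graph (infinite if no path exists).\<close>
definition graph_dist :: "'a::metric_space set \<Rightarrow> 'a set set \<Rightarrow> 'a \<Rightarrow> 'a \<Rightarrow> ereal" where
  "graph_dist V E u v =
     Inf {ereal (walk_length xs) | xs. is_walk V E xs \<and> hd xs = u \<and> last xs = v}"

definition steiner_spanner ::
  "real \<Rightarrow> 'a::metric_space set \<Rightarrow> 'a set \<Rightarrow> 'a set set \<Rightarrow> bool" where
  "steiner_spanner t P S E \<longleftrightarrow> finite S \<and> S \<inter> P = {} \<and>
     geometric_graph (P \<union> S) E \<and>
     (\<forall>u\<in>P. \<forall>v\<in>P. graph_dist (P \<union> S) E u v \<le> ereal t * ereal (dist u v))"

definition bipartite_steiner_spanner ::
  "real \<Rightarrow> 'a::metric_space set \<Rightarrow> 'a set \<Rightarrow> 'a set set \<Rightarrow> bool" where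
  "bipartite_steiner_spanner t P S E \<longleftrightarrow> steiner_spanner t P S E \<and>
     (\<forall>e\<in>E. \<exists>p s. e = {p, s} \<and> p \<in> P \<and> s \<in> S)"

definition spanner :: "real \<Rightarrow> 'a::metric_space set \<Rightarrow> 'a set set \<Rightarrow> bool" where
  "spanner t P E \<longleftrightarrow> steiner_spanner t P {} E"

end

theory Submission
  imports Defs
begin

lemma walk_length_single[simp]: "walk_length [x] = 0"
  by (simp add: walk_length_def)

lemma walk_length_Cons2[simp]:
  "walk_length (x#y#xs) = dist x y + walk_length (y#xs)"
  unfolding walk_length_def
  by (simp add: sum.lessThan_Suc_shift del: sum.lessThan_Suc)

lemma is_walk_single[simp]: "is_walk V E [x] \<longleftrightarrow> x \<in> V"
  by (simp add: is_walk_def)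

lemma is_walk_Cons2[simp]:
  "is_walk V E (x#y#xs) \<longleftrightarrow> x \<in> V \<and> {x,y} \<in> E \<and> is_walk V E (y#xs)"
proof
  assume h: "is_walk V E (x#y#xs)"
  have "\<forall>i. Suc i < length (y#xs) \<longrightarrow> {(y#xs) ! i, (y#xs) ! Suc i} \<in> E"
  proof (intro allI impI)
    fix i assume "Suc i < length (y#xs)"
    then have "Suc (Suc i) < length (x#y#xs)" by simp
    then show "{(y#xs) ! i, (y#xs) ! Suc i} \<in> E" using h unfolding is_walk_def
      by (metis nth_Cons_Suc)
  qed
  moreover have "{x,y} \<in> E"
  proof -
    from h have "Suc 0 < length (x#y#xs) \<longrightarrow> {(x#y#xs)!0, (x#y#xs)!Suc 0} \<in> E"
      unfolding is_walk_def by blast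
    then show ?thesis by simp
  qed
  ultimately show "x \<in> V \<and> {x,y} \<in> E \<and> is_walk V E (y#xs)"
    using h unfolding is_walk_def by auto
next
  assume h: "x \<in> V \<and> {x,y} \<in> E \<and> is_walk V E (y#xs)"
  show "is_walk V E (x#y#xs)" unfolding is_walk_def
  proof (intro conjI allI impI)
    show "set (x#y#xs) \<subseteq> V" using h by (simp add: is_walk_def)
  next
    fix i assume i: "Suc i < length (x#y#xs)"
    show "{(x#y#xs) ! i, (x#y#xs) ! Suc i} \<in> E"
    proof (cases i)
      case 0 then show ?thesis using h by simp
    next
      case (Suc j) then show ?thesis using h i unfolding is_walk_def by simp
    qed
  qed simp
qed

lemma transform:
  assumes "is_walk V E (x#xs)" "g x \<in> P"
    and H: "\<And>a b. {a,b}\<in>E \<Longrightarrow> g a \<in> P \<and> g b \<in> P \<and> (g a \<noteq> g b \<longrightarrow> {g a, g b} \<in> E')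
               \<and> dist (g a) (g b) \<le> 2*dist a b"
  shows "is_walk P E' (remdups_adj (map g (x#xs))) \<and>
         walk_length (remdups_adj (map g (x#xs))) \<le> 2 * walk_length (x#xs)"
  using assms(1,2)
proof (induction xs arbitrary: x)
  case Nil then show ?case by simp
next
  case (Cons y xs)
  have e: "{x,y} \<in> E" and w: "is_walk V E (y#xs)" using Cons.prems by auto
  from H[OF e] have gy: "g y \<in> P" and d: "dist (g x) (g y) \<le> 2*dist x y"
    and ed: "g x \<noteq> g y \<longrightarrow> {g x, g y} \<in> E'" by auto
  from Cons.IH[OF w gy] have IH:
    "is_walk P E' (remdups_adj (map g (y#xs)))"
    "walk_length (remdups_adj (map g (y#xs))) \<le> 2 * walk_length (y#xs)" by auto
  show ?case
  proof (cases "g x = g y")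
    case True
    then have "remdups_adj (map g (x#y#xs)) = remdups_adj (map g (y#xs))" by simp
    moreover have "walk_length (remdups_adj (map g (y#xs))) \<le> 2 * walk_length (x#y#xs)"
    proof -
      have "0 \<le> dist x y" by simp
      then show ?thesis using IH(2) unfolding walk_length_Cons2 distrib_left by (smt (verit))
    qed
    ultimately show ?thesis using IH(1) by metis
  next
    case False
    obtain b R where R: "remdups_adj (map g (y#xs)) = b # R"
      by (cases "remdups_adj (map g (y#xs))") auto
    have b: "b = g y" using arg_cong[OF R, of hd] by simp
    have eq: "remdups_adj (map g (x#y#xs)) = g x # b # R" using False R by simp
    show ?thesis unfolding eq using IH R b ed False Cons.prems(2) d by auto
  qed
qed


theorem mainTheorem7:
  fixes P S :: "'a::metric_space set" and E :: "'a set set" and \<epsilon> :: real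
  assumes "finite P" and "\<epsilon> \<ge> 0"
    and "bipartite_steiner_spanner (1 + \<epsilon>) P S E"
  shows "\<exists>E'. spanner (2 + 2 * \<epsilon>) P E' \<and> card E' \<le> card E"
proof -
  have finS: "finite S" and disj: "S \<inter> P = {}" and gg: "geometric_graph (P \<union> S) E"
    and sp: "\<forall>u\<in>P. \<forall>v\<in>P. graph_dist (P \<union> S) E u v \<le> ereal (1 + \<epsilon>) * ereal (dist u v)"
    and bip: "\<forall>e\<in>E. \<exists>p s. e = {p, s} \<and> p \<in> P \<and> s \<in> S"
    using assms(3) unfolding bipartite_steiner_spanner_def steiner_spanner_def by auto
  define N where "N s = {p\<in>P. {p,s}\<in>E}" for s
  define g where "g x = (if x \<in> P then x else (SOME p. p \<in> N x \<and> (\<forall>q\<in>N x. dist x p \<le> dist x q)))" for x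
  have gex: "g s \<in> N s \<and> (\<forall>q\<in>N s. dist s (g s) \<le> dist s q)" if "s \<notin> P" "N s \<noteq> {}" for s
  proof -
    have fN: "finite (N s)" using assms(1) unfolding N_def by auto
    have "Min (dist s ` N s) \<in> dist s ` N s" using fN that(2) by (intro Min_in) auto
    then obtain p where p: "p \<in> N s" "dist s p = Min (dist s ` N s)" by auto
    have "\<forall>q\<in>N s. dist s p \<le> dist s q" using p fN by auto
    then have "\<exists>p. p \<in> N s \<and> (\<forall>q\<in>N s. dist s p \<le> dist s q)" using p by blast
    from someI_ex[OF this] show ?thesis using that(1) unfolding g_def by simp
  qed
  define E' where "E' = {{g a, g b} | a b. {a,b} \<in> E \<and> g a \<noteq> g b}"
  have H1: "g p \<in> P \<and> g s \<in> P \<and> dist (g p) (g s) \<le> 2 * dist p s"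
    if "p \<in> P" "s \<in> S" "{p,s} \<in> E" for p s
  proof -
    have sP: "s \<notin> P" using disj that by auto
    have pN: "p \<in> N s" using that unfolding N_def by auto
    then have G: "g s \<in> N s" "dist s (g s) \<le> dist s p" using gex[OF sP] by auto
    have "dist p (g s) \<le> dist p s + dist s (g s)" by (rule dist_triangle)
    also have "\<dots> \<le> 2 * dist p s" using G(2) by (simp add: dist_commute)
    finally show ?thesis using G(1) that(1) unfolding N_def g_def by auto
  qed
  have H: "g a \<in> P \<and> g b \<in> P \<and> (g a \<noteq> g b \<longrightarrow> {g a, g b} \<in> E')
               \<and> dist (g a) (g b) \<le> 2*dist a b" if ab: "{a,b}\<in>E" for a b
  proof -
    obtain p s where ps: "{a,b} = {p,s}" "p \<in> P" "s \<in> S" using bip ab by blast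
    have e: "{p,s} \<in> E" using ab ps by simp
    have E'm: "g a \<noteq> g b \<longrightarrow> {g a, g b} \<in> E'" using ab unfolding E'_def by blast
    from ps(1) have "(a = p \<and> b = s) \<or> (a = s \<and> b = p)" by (auto simp: doubleton_eq_iff)
    then show ?thesis using H1[OF ps(2,3) e] E'm by (auto simp: dist_commute)
  qed
  have finE: "finite E"
  proof -
    have "E \<subseteq> Pow (P \<union> S)" using gg unfolding geometric_graph_def by auto
    then show ?thesis using assms(1) finS by (meson finite_Pow_iff finite_UnI finite_subset)
  qed
  have card: "card E' \<le> card E"
  proof -
    have "E' \<subseteq> (\<lambda>e. g ` e) ` E" unfolding E'_def
    proof (clarify)
      fix a b assume "{a,b} \<in> E"
      moreover have "{g a, g b} = g ` {a,b}" by simp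
      ultimately show "{g a, g b} \<in> (\<lambda>e. g ` e) ` E" by (metis image_eqI)
    qed
    then have "card E' \<le> card ((\<lambda>e. g ` e) ` E)" using finE by (intro card_mono) auto
    also have "\<dots> \<le> card E" using finE by (rule card_image_le)
    finally show ?thesis .
  qed
  have gg': "geometric_graph P E'"
    unfolding geometric_graph_def using assms(1) H unfolding E'_def by blast
  have C: "graph_dist P E' u v \<le> ereal (2 * walk_length xs)"
    if uv: "u \<in> P" "v \<in> P" and w: "is_walk (P \<union> S) E xs" "hd xs = u" "last xs = v" for u v xs
  proof -
    obtain x xs' where xs: "xs = x # xs'" using w(1) unfolding is_walk_def by (cases xs) auto
    have gx: "g x \<in> P" "g x = u" using uv w(2) xs unfolding g_def by auto
    have T: "is_walk P E' (remdups_adj (map g (x#xs'))) \<and>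
         walk_length (remdups_adj (map g (x#xs'))) \<le> 2 * walk_length (x#xs')"
      by (rule transform[of "P \<union> S" E x xs' g P E']) (use w(1) xs gx H in auto)
    have hd: "hd (remdups_adj (map g (x#xs'))) = u" using gx by simp
    have lst: "last (remdups_adj (map g (x#xs'))) = v"
    proof -
      have "last (map g (x#xs')) = g (last (x#xs'))" by (rule last_map) simp
      then show ?thesis using w(3) xs uv unfolding g_def by simp
    qed
    have "graph_dist P E' u v \<le> ereal (walk_length (remdups_adj (map g (x#xs'))))"
      unfolding graph_dist_def using T hd lst by (intro Inf_lower) blast
    also have "\<dots> \<le> ereal (2 * walk_length xs)" using T xs by simp
    finally show ?thesis .
  qed
  have D: "graph_dist P E' u v \<le> ereal (2 + 2 * \<epsilon>) * ereal (dist u v)"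
    if uv: "u \<in> P" "v \<in> P" for u v
  proof (rule ereal_le_epsilon2)
    fix e :: real assume e: "0 < e"
    have "graph_dist (P \<union> S) E u v \<le> ereal ((1 + \<epsilon>) * dist u v)" using sp uv by simp
    also have "\<dots> < ereal ((1 + \<epsilon>) * dist u v + e/2)" using e by simp
    finally have "\<exists>y\<in>{ereal (walk_length xs) | xs. is_walk (P \<union> S) E xs \<and> hd xs = u \<and> last xs = v}.
        y < ereal ((1 + \<epsilon>) * dist u v + e/2)"
      unfolding graph_dist_def by (simp add: Inf_less_iff)
    then obtain xs where xs: "is_walk (P \<union> S) E xs" "hd xs = u" "last xs = v"
      "walk_length xs < (1 + \<epsilon>) * dist u v + e/2" by auto
    have "graph_dist P E' u v \<le> ereal (2 * walk_length xs)" using C[OF uv xs(1-3)] .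
    also have "\<dots> \<le> ereal ((2 + 2 * \<epsilon>) * dist u v + e)" using xs(4) by (simp add: algebra_simps)
    finally show "graph_dist P E' u v \<le> ereal (2 + 2 * \<epsilon>) * ereal (dist u v) + ereal e" by simp
  qed
  have "spanner (2 + 2 * \<epsilon>) P E'"
    unfolding spanner_def steiner_spanner_def using gg' D by simp
  then show ?thesis using card by blast
qed

end
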